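(* Let $X$ be a complex Banach space with a Schauder decomposition $\mathcal{D}=\{X_n:n\ge1\}$, let $K=\sup_{N\ge1}\|P_N\|$ and $Q_N=I_X-P_N$. Let $(a_n)_{n\ge1}$ be a nondecreasing sequence in $(0,\infty)$ with $\lim_na_n=\infty$, and let $A^{-1}\in B(X)$ be given by $A^{-1}x=\sum_{n\ge1}a_n^{-1}p_n(x)$. Then for every $t>0$ and $N\ge1$, $$\|e^{-tA^{-1}}-Q_N\|\le2(1+K)\big(e^{-t/a_N}+1-e^{-t/a_{N+1}}\big).$$ In particular, for $a_n=(n!)^3$ and $t_N=N(N!)^3$ one has $\sum_{N\ge1}\|e^{-t_NA^{-1}}-Q_N\|<\infty$.
   Context: A Schauder decomposition of $X$ is a sequence $\mathcal{D}=\{X_n:n\ge1\}$ of closed subspaces such that every $x\in X$ has a unique expansion $x=\sum_nx_n$ with $x_n\in X_n$; $p_n(x)=x_n$ and $P_N=\sum_{n=1}^Np_n$; the set $\{P_N\}$ is bounded. Here $A^{-1}$ is the inverse of the sectorial operator $Ax=\sum_na_np_n(x)$, $D(A)=\{x:\sum_na_np_n(x)\text{ converges}\}$, and $e^{-tA^{-1}}$ is the exponential of the bounded operator $-tA^{-1}$ (equal to $x\mapsto\sum_ne^{-t/a_n}p_n(x)$). *)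

theory Defs
  imports "HOL-Analysis.Analysis"
begin

class complex_banach = banach +
  fixes scaleC :: "complex \<Rightarrow> 'a \<Rightarrow> 'a" (infixr \<open>*\<^sub>C\<close> 75)
  assumes scaleC_add_right: "c *\<^sub>C (x + y) = c *\<^sub>C x + c *\<^sub>C y"
    and scaleC_add_left: "(b + c) *\<^sub>C x = b *\<^sub>C x + c *\<^sub>C x"
    and scaleC_scaleC: "b *\<^sub>C (c *\<^sub>C x) = (b * c) *\<^sub>C x"
    and scaleC_one: "1 *\<^sub>C x = x"
    and scaleC_of_real: "complex_of_real r *\<^sub>C x = r *\<^sub>R x"
    and norm_scaleC: "norm (c *\<^sub>C x) = cmod c * norm x"

definition csubspace :: "'a::complex_banach set \<Rightarrow> bool" where
  "csubspace S \<longleftrightarrow> 0 \<in> S \<and> (\<forall>x\<in>S. \<forall>y\<in>S. x + y \<in> S) \<and> (\<forall>c::complex. \<forall>x\<in>S. c *\<^sub>C x \<in> S)"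

definition is_expansion :: "(nat \<Rightarrow> 'a::complex_banach set) \<Rightarrow> 'a \<Rightarrow> (nat \<Rightarrow> 'a) \<Rightarrow> bool" where
  "is_expansion Xs x u \<longleftrightarrow> (\<forall>n\<ge>1. u n \<in> Xs n) \<and> u 0 = 0 \<and> (\<lambda>N. \<Sum>n\<in>{1..N}. u n) \<longlonglongrightarrow> x"

definition coord :: "(nat \<Rightarrow> 'a::complex_banach set) \<Rightarrow> nat \<Rightarrow> 'a \<Rightarrow> 'a" where
  "coord Xs n x = (THE u. is_expansion Xs x u) n"

definition psum_proj :: "(nat \<Rightarrow> 'a::complex_banach set) \<Rightarrow> nat \<Rightarrow> 'a \<Rightarrow> 'a" where
  "psum_proj Xs N x = (\<Sum>n\<in>{1..N}. coord Xs n x)"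

definition schauder_decomposition :: "(nat \<Rightarrow> 'a::complex_banach set) \<Rightarrow> bool" where
  "schauder_decomposition Xs \<longleftrightarrow>
     (\<forall>n\<ge>1. csubspace (Xs n) \<and> closed (Xs n)) \<and>
     (\<forall>x. \<exists>!u. is_expansion Xs x u) \<and>
     (\<exists>C. \<forall>N\<ge>1. \<forall>x. norm (psum_proj Xs N x) \<le> C * norm x)"

definition op_exp :: "('a::real_normed_vector \<Rightarrow> 'a) \<Rightarrow> 'a \<Rightarrow> 'a" where
  "op_exp T x = (\<Sum>k. (1 / fact k) *\<^sub>R (T ^^ k) x)"

end

theory Submission
  imports Defs
begin



context
  fixes Xs :: "nat \<Rightarrow> 'a::complex_banach set"
  assumes decomp: "schauder_decomposition Xs"
begin

lemma sub: "n \<ge> 1 \<Longrightarrow> csubspace (Xs n)"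
  using decomp unfolding schauder_decomposition_def by blast

lemma exp_ex: "is_expansion Xs x (\<lambda>n. coord Xs n x)"
proof -
  have "\<exists>!u. is_expansion Xs x u" using decomp unfolding schauder_decomposition_def by blast
  from theI'[OF this] show ?thesis unfolding coord_def by simp
qed

lemma exp_uniq: "is_expansion Xs x u \<Longrightarrow> coord Xs n x = u n"
proof -
  assume u: "is_expansion Xs x u"
  have "\<exists>!u. is_expansion Xs x u" using decomp unfolding schauder_decomposition_def by blast
  with u exp_ex have "(\<lambda>n. coord Xs n x) = u" by blast
  then show ?thesis by metis
qed

lemma coord_in: "n \<ge> 1 \<Longrightarrow> coord Xs n x \<in> Xs n"
  using exp_ex unfolding is_expansion_def by blast

lemma coord0: "coord Xs 0 x = 0"
  using exp_ex unfolding is_expansion_def by blast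

lemma psum_lim: "(\<lambda>N. psum_proj Xs N x) \<longlonglongrightarrow> x"
  using exp_ex unfolding is_expansion_def psum_proj_def by blast

lemma coord_add: "coord Xs n (x + y) = coord Xs n x + coord Xs n y"
proof -
  have "is_expansion Xs (x + y) (\<lambda>n. coord Xs n x + coord Xs n y)"
    unfolding is_expansion_def
  proof (intro conjI allI impI)
    fix n :: nat assume "n \<ge> 1"
    then show "coord Xs n x + coord Xs n y \<in> Xs n"
      using sub[of n] coord_in[of n] unfolding csubspace_def by blast
  next
    show "coord Xs 0 x + coord Xs 0 y = 0" by (simp add: coord0)
  next
    have "(\<lambda>N. psum_proj Xs N x + psum_proj Xs N y) \<longlonglongrightarrow> x + y"
      by (intro tendsto_add psum_lim)
    then show "(\<lambda>N. \<Sum>n\<in>{1..N}. coord Xs n x + coord Xs n y) \<longlonglongrightarrow> x + y"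
      by (simp add: psum_proj_def sum.distrib)
  qed
  then show ?thesis by (rule exp_uniq)
qed

lemma coord_scale: "coord Xs n (r *\<^sub>R x) = r *\<^sub>R coord Xs n x"
proof -
  have "is_expansion Xs (r *\<^sub>R x) (\<lambda>n. r *\<^sub>R coord Xs n x)"
    unfolding is_expansion_def
  proof (intro conjI allI impI)
    fix n :: nat assume "n \<ge> 1"
    then have "complex_of_real r *\<^sub>C coord Xs n x \<in> Xs n"
      using sub[of n] coord_in[of n] unfolding csubspace_def by blast
    then show "r *\<^sub>R coord Xs n x \<in> Xs n" by (simp add: scaleC_of_real)
  next
    show "r *\<^sub>R coord Xs 0 x = 0" by (simp add: coord0)
  next
    have "(\<lambda>N. r *\<^sub>R psum_proj Xs N x) \<longlonglongrightarrow> r *\<^sub>R x"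
      by (intro tendsto_scaleR tendsto_const psum_lim)
    then show "(\<lambda>N. \<Sum>n\<in>{1..N}. r *\<^sub>R coord Xs n x) \<longlonglongrightarrow> r *\<^sub>R x"
      by (simp add: psum_proj_def scaleR_sum_right)
  qed
  then show ?thesis by (rule exp_uniq)
qed

lemma coord_single:
  assumes n: "n \<ge> 1" and y: "y \<in> Xs n"
  shows "coord Xs m y = (if m = n then y else 0)"
proof -
  have "is_expansion Xs y (\<lambda>m. if m = n then y else 0)"
    unfolding is_expansion_def
  proof (intro conjI allI impI)
    fix m :: nat assume "m \<ge> 1"
    then show "(if m = n then y else 0) \<in> Xs m"
      using sub[of m] y unfolding csubspace_def by auto
  next
    show "(if 0 = n then y else 0) = 0" using n by simp
  next
    have "eventually (\<lambda>N. (\<Sum>m\<in>{1..N}. if m = n then y else 0) = y) sequentially"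
      using eventually_ge_at_top[of n] by eventually_elim (use n in auto)
    then show "(\<lambda>N. \<Sum>m\<in>{1..N}. if m = n then y else 0) \<longlonglongrightarrow> y"
      by (rule tendsto_eventually)
  qed
  then show ?thesis by (rule exp_uniq)
qed

lemma psum_single:
  assumes n: "n \<ge> 1" and y: "y \<in> Xs n"
  shows "psum_proj Xs N y = (if n \<le> N then y else 0)"
  using n by (simp add: psum_proj_def coord_single[OF n y])

lemma psum_bl: "bounded_linear (psum_proj Xs N)"
proof -
  obtain C where C: "\<forall>N\<ge>1. \<forall>x. norm (psum_proj Xs N x) \<le> C * norm x"
    using decomp unfolding schauder_decomposition_def by blast
  show ?thesis
  proof (rule bounded_linear_intro[where K="max C 0"])
    show "psum_proj Xs N (x + y) = psum_proj Xs N x + psum_proj Xs N y" for x y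
      by (simp add: psum_proj_def coord_add sum.distrib)
    show "psum_proj Xs N (r *\<^sub>R x) = r *\<^sub>R psum_proj Xs N x" for r x
      by (simp add: psum_proj_def coord_scale scaleR_sum_right)
    show "norm (psum_proj Xs N x) \<le> norm x * max C 0" for x
    proof (cases "N \<ge> 1")
      case True
      then have "norm (psum_proj Xs N x) \<le> C * norm x" using C by blast
      also have "\<dots> \<le> norm x * max C 0" by (metis max.cobounded1 mult.commute mult_left_mono norm_ge_zero)
      finally show ?thesis .
    next
      case False
      then show ?thesis by (simp add: psum_proj_def)
    qed
  qed
qed

lemma K_bdd: "bdd_above ((\<lambda>M. onorm (psum_proj Xs M)) ` {1..})"
proof -
  obtain C where C: "\<forall>N\<ge>1. \<forall>x. norm (psum_proj Xs N x) \<le> C * norm x"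
    using decomp unfolding schauder_decomposition_def by blast
  have "onorm (psum_proj Xs M) \<le> max C 0" if "M \<ge> 1" for M
  proof (rule onorm_bound)
    show "norm (psum_proj Xs M x) \<le> max C 0 * norm x" for x
      using C that by (meson max.cobounded1 mult_right_mono norm_ge_zero order_trans)
  qed simp
  then show ?thesis by (auto intro!: bdd_aboveI)
qed

lemma psum_K: "norm (psum_proj Xs M x) \<le> (SUP M\<in>{1..}. onorm (psum_proj Xs M)) * norm x"
proof (cases "M \<ge> 1")
  case True
  have "onorm (psum_proj Xs M) \<le> (SUP M\<in>{1..}. onorm (psum_proj Xs M))"
    using K_bdd True by (intro cSUP_upper) auto
  then show ?thesis using onorm[OF psum_bl, of M x]
    by (meson mult_right_mono norm_ge_zero order_trans)
next
  case False
  have "0 \<le> onorm (psum_proj Xs 1)" by (rule onorm_pos_le[OF psum_bl])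
  also have "\<dots> \<le> (SUP M\<in>{1..}. onorm (psum_proj Xs M))"
    using K_bdd by (intro cSUP_upper) auto
  finally show ?thesis using False by (simp add: psum_proj_def)
qed

lemma K_nonneg: "0 \<le> (SUP M\<in>{1..}. onorm (psum_proj Xs M))"
proof -
  have "0 \<le> onorm (psum_proj Xs 1)" by (rule onorm_pos_le[OF psum_bl])
  also have "\<dots> \<le> (SUP M\<in>{1..}. onorm (psum_proj Xs M))"
    using K_bdd by (intro cSUP_upper) auto
  finally show ?thesis .
qed

end



lemma funpow_bl: "bounded_linear (T::'a::real_normed_vector\<Rightarrow>'a) \<Longrightarrow> bounded_linear (T ^^ k)"
  by (induction k) (auto simp: id_def o_def intro: bounded_linear_ident bounded_linear_compose)

lemma funpow_norm:
  assumes "bounded_linear (T::'a::real_normed_vector\<Rightarrow>'a)"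
  shows "norm ((T ^^ k) x) \<le> onorm T ^ k * norm x"
proof (induction k)
  case 0 then show ?case by (simp add: funpow_0)
next
  case (Suc k)
  have "norm ((T ^^ Suc k) x) = norm (T ((T ^^ k) x))" by simp
  also have "\<dots> \<le> onorm T * norm ((T ^^ k) x)" by (rule onorm[OF assms])
  also have "\<dots> \<le> onorm T * (onorm T ^ k * norm x)"
    using Suc onorm_pos_le[OF assms] by (rule mult_left_mono)
  finally show ?case by (simp add: mult.assoc)
qed

lemma exp_real_summ: "summable (\<lambda>k. L ^ k / fact k * (c::real))"
proof -
  have "summable (\<lambda>k. L ^ k /\<^sub>R fact k)" using exp_converges[of L] by (rule sums_summable)
  then show ?thesis by (intro summable_mult2) (simp add: divide_inverse_commute)
qed

lemma exp_real_sum: "(\<Sum>k. L ^ k / fact k * (c::real)) = exp L * c"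
proof -
  have "(\<lambda>k. L ^ k /\<^sub>R fact k) sums exp L" by (rule exp_converges)
  then have "(\<lambda>k. L ^ k / fact k) sums exp L" by (simp add: divide_inverse_commute)
  then have "(\<lambda>k. L ^ k / fact k * c) sums (exp L * c)" by (rule sums_mult2)
  then show ?thesis by (rule sums_unique[symmetric])
qed

context
  fixes T :: "'a::banach \<Rightarrow> 'a"
  assumes T: "bounded_linear T"
begin

lemma term_bound: "norm ((1 / fact k) *\<^sub>R (T ^^ k) x) \<le> onorm T ^ k / fact k * norm x"
proof -
  have "norm ((1 / fact k) *\<^sub>R (T ^^ k) x) = (1 / fact k) * norm ((T ^^ k) x)" by simp
  also have "\<dots> \<le> (1 / fact k) * (onorm T ^ k * norm x)"
    by (intro mult_left_mono funpow_norm T) auto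
  finally show ?thesis by simp
qed

lemma op_exp_summ: "summable (\<lambda>k. (1 / fact k) *\<^sub>R (T ^^ k) x)"
  by (rule summable_comparison_test'[OF exp_real_summ[of "onorm T" "norm x"] term_bound])

lemma op_exp_summ_norm: "summable (\<lambda>k. norm ((1 / fact k) *\<^sub>R (T ^^ k) x))"
  by (rule summable_comparison_test'[OF exp_real_summ[of "onorm T" "norm x"]]) (use term_bound in simp)

lemma op_exp_bl: "bounded_linear (op_exp T)"
proof (rule bounded_linear_intro[where K="exp (onorm T)"])
  fix x y
  have "op_exp T (x + y) = (\<Sum>k. (1 / fact k) *\<^sub>R (T ^^ k) x + (1 / fact k) *\<^sub>R (T ^^ k) y)"
    unfolding op_exp_def
    by (simp add: linear_add[OF bounded_linear.linear[OF funpow_bl[OF T]]] scaleR_add_right)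
  also have "\<dots> = op_exp T x + op_exp T y"
    unfolding op_exp_def by (rule suminf_add[OF op_exp_summ op_exp_summ, symmetric])
  finally show "op_exp T (x + y) = op_exp T x + op_exp T y" .
next
  fix r x
  have "op_exp T (r *\<^sub>R x) = (\<Sum>k. r *\<^sub>R ((1 / fact k) *\<^sub>R (T ^^ k) x))"
    unfolding op_exp_def
    by (simp add: linear_cmul[OF bounded_linear.linear[OF funpow_bl[OF T]]])
  also have "\<dots> = r *\<^sub>R op_exp T x"
    unfolding op_exp_def by (rule suminf_scaleR_right[OF op_exp_summ, symmetric])
  finally show "op_exp T (r *\<^sub>R x) = r *\<^sub>R op_exp T x" .
next
  fix x
  have "norm (op_exp T x) \<le> (\<Sum>k. norm ((1 / fact k) *\<^sub>R (T ^^ k) x))"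
    unfolding op_exp_def by (rule summable_norm[OF op_exp_summ_norm])
  also have "\<dots> \<le> (\<Sum>k. onorm T ^ k / fact k * norm x)"
    by (rule suminf_le[OF term_bound op_exp_summ_norm exp_real_summ])
  also have "\<dots> = exp (onorm T) * norm x" by (rule exp_real_sum)
  finally show "norm (op_exp T x) \<le> norm x * exp (onorm T)" by (simp add: mult.commute)
qed

lemma op_exp_eigen:
  assumes "T y = c *\<^sub>R y"
  shows "op_exp T y = exp c *\<^sub>R y"
proof -
  have pw: "(T ^^ k) y = c ^ k *\<^sub>R y" for k
  proof (induction k)
    case 0 then show ?case by simp
  next
    case (Suc k)
    have "(T ^^ Suc k) y = T (c ^ k *\<^sub>R y)" using Suc by simp
    also have "\<dots> = c ^ k *\<^sub>R T y" by (rule linear_cmul[OF bounded_linear.linear[OF T]])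
    finally show ?case using assms by (simp add: mult.commute)
  qed
  have "(\<lambda>k. c ^ k /\<^sub>R fact k) sums exp c" by (rule exp_converges)
  then have "(\<lambda>k. (c ^ k /\<^sub>R fact k) *\<^sub>R y) sums (exp c *\<^sub>R y)" by (rule sums_scaleR_left)
  moreover have "(\<lambda>k. (c ^ k /\<^sub>R fact k) *\<^sub>R y) = (\<lambda>k. (1 / fact k) *\<^sub>R (T ^^ k) y)"
    by (simp add: pw divide_inverse_commute)
  ultimately show ?thesis unfolding op_exp_def by (simp add: sums_unique[symmetric])
qed

end



lemma abel:
  fixes S :: "nat \<Rightarrow> 'a::real_normed_vector"
  assumes "S 0 = 0"
  shows "(\<Sum>n<M. c (Suc n) *\<^sub>R (S (Suc n) - S n)) = c M *\<^sub>R S M - (\<Sum>n<M. (c (Suc n) - c n) *\<^sub>R S n)"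
proof (induction M)
  case 0 then show ?case using assms by simp
next
  case (Suc M)
  then show ?case by (simp add: algebra_simps)
qed

lemma abel_bound:
  fixes S :: "nat \<Rightarrow> 'a::real_normed_vector"
  assumes "S 0 = 0" and B: "\<And>n. norm (S n) \<le> B"
  shows "norm (\<Sum>n<M. c (Suc n) *\<^sub>R (S (Suc n) - S n)) \<le> (\<bar>c M\<bar> + (\<Sum>n<M. \<bar>c (Suc n) - c n\<bar>)) * B"
proof -
  have "norm (\<Sum>n<M. c (Suc n) *\<^sub>R (S (Suc n) - S n))
      \<le> norm (c M *\<^sub>R S M) + norm (\<Sum>n<M. (c (Suc n) - c n) *\<^sub>R S n)"
    unfolding abel[of S, OF assms(1)] by (rule norm_triangle_ineq4)
  also have "norm (c M *\<^sub>R S M) \<le> \<bar>c M\<bar> * B" using B by (simp add: mult_left_mono)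
  also have "norm (\<Sum>n<M. (c (Suc n) - c n) *\<^sub>R S n) \<le> (\<Sum>n<M. norm ((c (Suc n) - c n) *\<^sub>R S n))"
    by (rule norm_sum)
  also have "\<dots> \<le> (\<Sum>n<M. \<bar>c (Suc n) - c n\<bar> * B)"
    by (intro sum_mono) (simp add: B mult_left_mono)
  finally show ?thesis by (simp add: distrib_right sum_distrib_right)
qed




context
  fixes Xs :: "nat \<Rightarrow> 'a::complex_banach set"
    and a :: "nat \<Rightarrow> real"
    and Ainv :: "'a \<Rightarrow> 'a"
  assumes decomp: "schauder_decomposition Xs"
    and a_pos: "\<forall>n\<ge>1. a n > 0"
    and a_mono: "\<forall>n\<ge>1. a n \<le> a (Suc n)"
    and Ainv_bdd: "bounded_linear Ainv"
    and Ainv_def: "\<forall>x. ((\<lambda>n. if n \<ge> 1 then (1 / a n) *\<^sub>R coord Xs n x else 0) sums Ainv x)"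
begin

lemma Ainv_single:
  assumes n: "n \<ge> 1" and y: "y \<in> Xs n"
  shows "Ainv y = (1 / a n) *\<^sub>R y"
proof -
  have "(\<lambda>m. if m \<ge> 1 then (1 / a m) *\<^sub>R coord Xs m y else 0) = (\<lambda>m. if m = n then (1 / a n) *\<^sub>R y else 0)"
    using n by (intro ext) (simp add: coord_single[OF decomp n y])
  moreover have "(\<lambda>m. if m = n then (1 / a n) *\<^sub>R y else 0) sums ((1 / a n) *\<^sub>R y)"
    using sums_single[of n "\<lambda>_. (1 / a n) *\<^sub>R y"] by simp
  ultimately show ?thesis using Ainv_def sums_unique2 by metis
qed

definition TT :: "real \<Rightarrow> 'a \<Rightarrow> 'a" where "TT t = (\<lambda>y. - (t *\<^sub>R Ainv y))"
definition DD :: "real \<Rightarrow> nat \<Rightarrow> 'a \<Rightarrow> 'a" where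
  "DD t N = (\<lambda>x. op_exp (\<lambda>y. - (t *\<^sub>R Ainv y)) x - (x - psum_proj Xs N x))"
definition ee :: "real \<Rightarrow> nat \<Rightarrow> real" where "ee t n = exp (- t / a (max 1 n))"
definition cc :: "real \<Rightarrow> nat \<Rightarrow> nat \<Rightarrow> real" where
  "cc t N n = ee t n - (if n \<le> N then 0 else 1)"

lemma TT_bl: "bounded_linear (TT t)"
  unfolding TT_def by (rule bounded_linear_minus[OF bounded_linear_compose[OF bounded_linear_scaleR_right Ainv_bdd]])

lemma DD_bl: "bounded_linear (DD t N)"
  unfolding DD_def
  by (intro bounded_linear_sub bounded_linear_ident psum_bl[OF decomp] op_exp_bl TT_bl[unfolded TT_def])

lemma DD_single:
  assumes n: "n \<ge> 1" and y: "y \<in> Xs n"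
  shows "DD t N y = cc t N n *\<^sub>R y"
proof -
  have "TT t y = (- t / a n) *\<^sub>R y" unfolding TT_def using Ainv_single[OF n y] by simp
  then have "op_exp (TT t) y = exp (- t / a n) *\<^sub>R y" by (rule op_exp_eigen[OF TT_bl])
  then show ?thesis
    using n unfolding DD_def cc_def ee_def TT_def
    by (simp add: psum_single[OF decomp n y] max_absorb2 algebra_simps)
qed

lemma ee_pos: "0 < ee t n" unfolding ee_def by simp

lemma ee_le1: "t > 0 \<Longrightarrow> ee t n \<le> 1"
  unfolding ee_def using a_pos by (simp add: divide_nonneg_pos)

lemma ee_mono: "t > 0 \<Longrightarrow> ee t n \<le> ee t (Suc n)"
proof -
  assume t: "t > 0"
  have "a (max 1 n) \<le> a (max 1 (Suc n))"
    using a_mono by (cases n) auto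
  moreover have "a (max 1 n) > 0" using a_pos by simp
  ultimately have "t / a (max 1 (Suc n)) \<le> t / a (max 1 n)"
    using t by (intro divide_left_mono) auto
  then show ?thesis unfolding ee_def by simp
qed

lemma variation:
  assumes t: "t > 0" and NM: "N < M"
  shows "\<bar>cc t N M\<bar> + (\<Sum>n<M. \<bar>cc t N (Suc n) - cc t N n\<bar>) \<le> 2 * (ee t N + 1 - ee t (Suc N))"
proof -
  have step: "\<bar>cc t N (Suc n) - cc t N n\<bar> = (ee t (Suc n) - ee t n) + (if n = N then 1 + 2 * ee t N - 2 * ee t (Suc N) else 0)" for n
  proof (cases "n = N")
    case True
    have d: "cc t N (Suc n) - cc t N n = ee t (Suc N) - 1 - ee t N" using True unfolding cc_def by simp
    have "ee t (Suc N) - 1 - ee t N \<le> 0" using ee_le1[OF t, of "Suc N"] ee_pos[of t N] by simp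
    then show ?thesis unfolding d using True by (simp add: abs_of_nonpos)
  next
    case False
    have i: "(if Suc n \<le> N then 0 else 1) = (if n \<le> N then 0 else (1::real))" using False by simp
    have d: "cc t N (Suc n) - cc t N n = ee t (Suc n) - ee t n" unfolding cc_def i by simp
    show ?thesis unfolding d using False ee_mono[OF t, of n] by simp
  qed
  have "(\<Sum>n<M. \<bar>cc t N (Suc n) - cc t N n\<bar>) = (\<Sum>n<M. ee t (Suc n) - ee t n) + (\<Sum>n<M. if n = N then 1 + 2 * ee t N - 2 * ee t (Suc N) else 0)"
    unfolding step by (rule sum.distrib)
  also have "\<dots> = ee t M - ee t 0 + (1 + 2 * ee t N - 2 * ee t (Suc N))"
    using NM by (simp add: sum_lessThan_telescope)
  finally have 1: "(\<Sum>n<M. \<bar>cc t N (Suc n) - cc t N n\<bar>) = ee t M - ee t 0 + (1 + 2 * ee t N - 2 * ee t (Suc N))" .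
  have 2: "\<bar>cc t N M\<bar> = 1 - ee t M" using NM ee_le1[OF t, of M] unfolding cc_def by auto
  show ?thesis unfolding 1 2 using ee_pos[of t 0] by simp
qed

abbreviation "KK \<equiv> (SUP M\<in>{1..}. onorm (psum_proj Xs M))"

lemma DD_psum: "DD t N (psum_proj Xs M x) = (\<Sum>n<M. cc t N (Suc n) *\<^sub>R (psum_proj Xs (Suc n) x - psum_proj Xs n x))"
proof -
  have "DD t N (psum_proj Xs M x) = (\<Sum>n\<in>{1..M}. DD t N (coord Xs n x))"
    unfolding psum_proj_def[of Xs M] by (rule linear_sum[OF bounded_linear.linear[OF DD_bl]])
  also have "\<dots> = (\<Sum>n\<in>{1..M}. cc t N n *\<^sub>R coord Xs n x)"
    by (intro sum.cong refl) (simp add: DD_single coord_in[OF decomp])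
  also have "\<dots> = (\<Sum>n<M. cc t N (Suc n) *\<^sub>R coord Xs (Suc n) x)"
    by (rule sum_bounds_lt_plus1[symmetric])
  also have "\<dots> = (\<Sum>n<M. cc t N (Suc n) *\<^sub>R (psum_proj Xs (Suc n) x - psum_proj Xs n x))"
    by (simp add: psum_proj_def)
  finally show ?thesis .
qed

lemma DD_bound:
  assumes t: "t > 0" and N: "N \<ge> 1"
  shows "onorm (DD t N) \<le> 2 * (1 + KK) * (exp (- t / a N) + 1 - exp (- t / a (Suc N)))"
proof -
  define B where "B = 2 * (ee t N + 1 - ee t (Suc N))"
  have B0: "0 \<le> B" unfolding B_def using ee_pos[of t N] ee_le1[OF t, of "Suc N"] by simp
  have K0: "0 \<le> KK" by (rule K_nonneg[OF decomp])
  have bx: "norm (DD t N x) \<le> B * KK * norm x" for x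
  proof -
    have ev: "eventually (\<lambda>M. norm (DD t N (psum_proj Xs M x)) \<le> B * KK * norm x) sequentially"
      using eventually_gt_at_top[of N]
    proof eventually_elim
      case (elim M)
      have "norm (DD t N (psum_proj Xs M x)) \<le> (\<bar>cc t N M\<bar> + (\<Sum>n<M. \<bar>cc t N (Suc n) - cc t N n\<bar>)) * (KK * norm x)"
        unfolding DD_psum
        by (rule abel_bound, simp add: psum_proj_def, rule psum_K[OF decomp])
      also have "\<dots> \<le> B * (KK * norm x)"
        unfolding B_def using variation[OF t elim] K0
        by (intro mult_right_mono) auto
      finally show ?case by (simp add: mult.assoc)
    qed
    have "(\<lambda>M. norm (DD t N (psum_proj Xs M x))) \<longlonglongrightarrow> norm (DD t N x)"
      by (intro tendsto_norm bounded_linear.tendsto[OF DD_bl] psum_lim[OF decomp])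
    then show ?thesis using ev by (rule tendsto_upperbound) simp
  qed
  have "onorm (DD t N) \<le> B * KK"
    by (rule onorm_bound) (use B0 K0 bx in auto)
  also have "\<dots> \<le> B * (1 + KK)" using B0 by (intro mult_left_mono) auto
  also have "\<dots> = 2 * (1 + KK) * (exp (- t / a N) + 1 - exp (- t / a (Suc N)))"
    unfolding B_def ee_def using N by (simp add: max_absorb2 algebra_simps)
  finally show ?thesis .
qed


lemma part1:
  "\<forall>t>0. \<forall>N\<ge>1.
            onorm (\<lambda>x. op_exp (\<lambda>y. - (t *\<^sub>R Ainv y)) x - (x - psum_proj Xs N x))
            \<le> 2 * (1 + (SUP M\<in>{1..}. onorm (psum_proj Xs M)))
                * (exp (- t / a N) + 1 - exp (- t / a (Suc N)))"
  using DD_bound unfolding DD_def by blast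

lemma xx: "x > (0::real) \<Longrightarrow> x / x^3 = inverse (x^2)"
  by (simp add: power3_eq_cube power2_eq_square field_simps)

lemma arith1: "real (Suc N) * (fact (Suc N))^3 / (fact (Suc (Suc N)))^3 \<le> inverse (real (Suc N) ^ 2)"
proof -
  have f: "(fact (Suc (Suc N)) :: real) = real (Suc (Suc N)) * fact (Suc N)" by (simp add: fact_Suc)
  have fp: "(fact (Suc N) :: real) > 0" by simp
  have "real (Suc N) * (fact (Suc N))^3 / (fact (Suc (Suc N)))^3 = real (Suc N) / real (Suc (Suc N)) ^ 3"
    unfolding f using fp by (simp add: power_mult_distrib)
  also have "\<dots> \<le> real (Suc N) / real (Suc N) ^ 3"
    by (intro divide_left_mono power_mono mult_pos_pos) auto
  also have "\<dots> = inverse (real (Suc N) ^ 2)" by (rule xx) simp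
  finally show ?thesis .
qed

lemma part2:
  assumes af: "\<forall>n\<ge>1. a n = fact n ^ 3"
  shows "summable (\<lambda>N. onorm (\<lambda>x. op_exp (\<lambda>y. - ((real (Suc N) * fact (Suc N) ^ 3) *\<^sub>R Ainv y)) x
                                     - (x - psum_proj Xs (Suc N) x)))"
proof (rule summable_comparison_test')
  define g where "g N = 2 * (1 + KK) * (exp (-1) ^ Suc N + inverse (real (Suc N) ^ 2))" for N
  show "summable g"
  proof -
    have "summable (\<lambda>N. exp (-1::real) ^ N)" by (rule summable_geometric) simp
    then have s1: "summable (\<lambda>N. exp (-1::real) ^ Suc N)" by (subst summable_Suc_iff)
    have "summable (\<lambda>n. inverse (real n ^ 2))" by (rule inverse_power_summable) simp
    then have s2: "summable (\<lambda>n. inverse (real (Suc n) ^ 2))" by (subst summable_Suc_iff)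
    show ?thesis unfolding g_def by (intro summable_mult summable_add s1 s2)
  qed
  fix N :: nat
  define t where "t = real (Suc N) * fact (Suc N) ^ 3"
  have t: "t > 0" unfolding t_def by simp
  have "norm (onorm (DD t (Suc N))) = onorm (DD t (Suc N))" using onorm_pos_le[OF DD_bl] by simp
  also have "\<dots> \<le> 2 * (1 + KK) * (exp (- t / a (Suc N)) + 1 - exp (- t / a (Suc (Suc N))))"
    by (rule DD_bound[OF t]) simp
  also have "\<dots> \<le> g N"
  proof -
    have K0: "0 \<le> KK" by (rule K_nonneg[OF decomp])
    have "- t / a (Suc N) = real (Suc N) * (-1)" using af unfolding t_def by simp
    then have e1: "exp (- t / a (Suc N)) = exp (-1) ^ Suc N" by (simp only: exp_of_nat_mult)
    have "1 - exp (- t / a (Suc (Suc N))) \<le> t / a (Suc (Suc N))"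
      using exp_ge_add_one_self[of "- t / a (Suc (Suc N))"] by simp
    also have "\<dots> \<le> inverse (real (Suc N) ^ 2)"
      using af arith1[of N] unfolding t_def by simp
    finally have e2: "1 - exp (- t / a (Suc (Suc N))) \<le> inverse (real (Suc N) ^ 2)" .
    show ?thesis unfolding g_def e1 using e2 K0 by (intro mult_left_mono) auto
  qed
  finally show "norm (onorm (\<lambda>x. op_exp (\<lambda>y. - ((real (Suc N) * fact (Suc N) ^ 3) *\<^sub>R Ainv y)) x
                                     - (x - psum_proj Xs (Suc N) x))) \<le> g N"
    unfolding DD_def t_def .
qed

end

theorem mainTheorem8:
  fixes Xs :: "nat \<Rightarrow> 'a::complex_banach set"
    and a :: "nat \<Rightarrow> real"
    and Ainv :: "'a \<Rightarrow> 'a"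
  assumes decomp: "schauder_decomposition Xs"
    and a_pos: "\<forall>n\<ge>1. a n > 0"
    and a_mono: "\<forall>n\<ge>1. a n \<le> a (Suc n)"
    and a_lim: "filterlim a at_top sequentially"
    and Ainv_bdd: "bounded_linear Ainv"
    and Ainv_def: "\<forall>x. ((\<lambda>n. if n \<ge> 1 then (1 / a n) *\<^sub>R coord Xs n x else 0) sums Ainv x)"
  shows "(\<forall>t>0. \<forall>N\<ge>1.
            onorm (\<lambda>x. op_exp (\<lambda>y. - (t *\<^sub>R Ainv y)) x - (x - psum_proj Xs N x))
            \<le> 2 * (1 + (SUP M\<in>{1..}. onorm (psum_proj Xs M)))
                * (exp (- t / a N) + 1 - exp (- t / a (Suc N))))
      \<and> ((\<forall>n\<ge>1. a n = fact n ^ 3) \<longrightarrow>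
           summable (\<lambda>N. onorm (\<lambda>x. op_exp (\<lambda>y. - ((real (Suc N) * fact (Suc N) ^ 3) *\<^sub>R Ainv y)) x
                                     - (x - psum_proj Xs (Suc N) x))))"
  using part1[OF decomp a_pos a_mono Ainv_bdd Ainv_def]
        part2[OF decomp a_pos a_mono Ainv_bdd Ainv_def] by blast

end
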